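(* Let $c>0$, $m>0$, $q\in\mathbb{R}\setminus\{0\}$, $E=(E_1,\dots,E_n)$ with $E_j\in C^1(\mathbb{R})$ and $\sup_t\sum_j|E_j^{(k)}(t)|<E_{0,k}<\infty$ for $k\in\{0,1\}$, and $b(t)=\int_0^tqE(s)\,ds$; assume condition (E1). Let $Q(t,\xi)=(c^2(\xi+b(t))^2+(mc^2)^2)^{1/2}$, let $B,D$ be the solutions of $$B(t,\xi)=\int_0^t\big(Q-Q^{-1}Q'\sin B\cos B\big)ds,\qquad D(t,\xi)=\int_0^t\big(Q+Q^{-1}Q'\sin D\cos D\big)ds,$$ and define $$A(t,\xi)=e^{-\int_0^tQ(s,\xi)^{-1}Q'(s,\xi)\sin^2B(s,\xi)\,ds},\qquad C(t,\xi)=Q(0,\xi)^{-1}e^{-\int_0^tQ(s,\xi)^{-1}Q'(s,\xi)\cos^2D(s,\xi)\,ds}.$$ Then there exist constants $0<C_0,C_1<\infty$, independent of $t$ and $\xi$, such that $$\frac{Q(0,\xi)^{1/2}}{Q(t,\xi)^{1/2}}e^{-C_0}\le|A(t,\xi)|\le\frac{Q(0,\xi)^{1/2}}{Q(t,\xi)^{1/2}}e^{C_0},\qquad \frac{e^{-C_1}}{Q(t,\xi)^{1/2}Q(0,\xi)^{1/2}}\le|C(t,\xi)|\le\frac{e^{C_1}}{Q(t,\xi)^{1/2}Q(0,\xi)^{1/2}}.$$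
   Context: $Q'=\partial_tQ$. Condition (E1): $\lim_{t\to\infty}|b(t)|=\infty$, and there exist constants $e_0,e_1$ such that for every $a\in\mathbb{R}^n$ and every $t$, $$\int_{\{s:\,|a+b(s)|\le 2E_{0,0}/(mc^2)\}}|b'(s)|\,ds\le e_0,\qquad \int_0^t\frac{|b'(s)|^2+|b''(s)|}{c^2(a+b(s))^2+(mc^2)^2}\,ds\le e_1 .$$ *)

theory Defs
  imports "HOL-Analysis.Analysis"
begin

definition drift :: "real \<Rightarrow> (real \<Rightarrow> real ^ 'n) \<Rightarrow> real \<Rightarrow> real ^ 'n" where
  "drift q E t = (if 0 \<le> t then integral {0..t} (\<lambda>s. q *\<^sub>R E s)
                  else - integral {t..0} (\<lambda>s. q *\<^sub>R E s))"

definition Qf :: "real \<Rightarrow> real \<Rightarrow> (real \<Rightarrow> real ^ 'n) \<Rightarrow> real \<Rightarrow> real ^ 'n \<Rightarrow> real" where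
  "Qf c m b t \<xi> = sqrt (c\<^sup>2 * (norm (\<xi> + b t))\<^sup>2 + (m * c\<^sup>2)\<^sup>2)"

definition Qd :: "real \<Rightarrow> real \<Rightarrow> (real \<Rightarrow> real ^ 'n) \<Rightarrow> real \<Rightarrow> real ^ 'n \<Rightarrow> real" where
  "Qd c m b t \<xi> = deriv (\<lambda>\<tau>. Qf c m b \<tau> \<xi>) t"

end

theory Submission
  imports Defs
begin


lemma inner_self_deriv:
  fixes u :: "real \<Rightarrow> real ^ 'n"
  assumes "(u has_vector_derivative u') (at s)"
  shows "((\<lambda>\<tau>. u \<tau> \<bullet> u \<tau>) has_real_derivative 2 * (u s \<bullet> u')) (at s)"
proof -
  have "((\<lambda>\<tau>. u \<tau> \<bullet> u \<tau>) has_derivative (\<lambda>h. u s \<bullet> (h *\<^sub>R u') + (h *\<^sub>R u') \<bullet> u s)) (at s)"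
    using has_derivative_inner[OF assms[unfolded has_vector_derivative_def] assms[unfolded has_vector_derivative_def]] .
  moreover have "(\<lambda>h. u s \<bullet> (h *\<^sub>R u') + (h *\<^sub>R u') \<bullet> u s) = (*) (2 * (u s \<bullet> u'))"
    by (rule ext) (simp add: inner_commute algebra_simps)
  ultimately show ?thesis by (simp add: has_field_derivative_def mult.commute)
qed

lemma Q_deriv:
  fixes b :: "real \<Rightarrow> real ^ 'n"
  assumes "(b has_vector_derivative b') (at s)" "c > 0" "m > 0"
  shows "((\<lambda>\<tau>. Qf c m b \<tau> \<xi>) has_real_derivative c\<^sup>2 * ((\<xi> + b s) \<bullet> b') / Qf c m b s \<xi>) (at s)"
proof -
  have u: "((\<lambda>\<tau>. \<xi> + b \<tau>) has_vector_derivative b') (at s)"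
    using assms(1) by (auto intro!: derivative_eq_intros)
  have d: "((\<lambda>\<tau>. (\<xi> + b \<tau>) \<bullet> (\<xi> + b \<tau>)) has_real_derivative 2 * ((\<xi> + b s) \<bullet> b')) (at s)"
    by (rule inner_self_deriv[OF u])
  have pos: "0 < c\<^sup>2 * ((\<xi> + b s) \<bullet> (\<xi> + b s)) + (m * c\<^sup>2)\<^sup>2"
    using assms by (simp add: add_nonneg_pos)
  have "((\<lambda>\<tau>. sqrt (c\<^sup>2 * ((\<xi> + b \<tau>) \<bullet> (\<xi> + b \<tau>)) + (m * c\<^sup>2)\<^sup>2)) has_real_derivative
      inverse (sqrt (c\<^sup>2 * ((\<xi> + b s) \<bullet> (\<xi> + b s)) + (m * c\<^sup>2)\<^sup>2)) / 2 * (c\<^sup>2 * (2 * ((\<xi> + b s) \<bullet> b')))) (at s)"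
    by (rule DERIV_chain2[where f=sqrt and g="\<lambda>\<tau>. c\<^sup>2 * ((\<xi> + b \<tau>) \<bullet> (\<xi> + b \<tau>)) + (m * c\<^sup>2)\<^sup>2" and x=s, OF DERIV_real_sqrt[OF pos]]) (auto intro!: derivative_eq_intros d)
  then show ?thesis
    by (simp add: Qf_def power2_norm_eq_inner field_simps)
qed

lemma osc_bound:
  fixes Q g h h' \<theta> \<rho> :: "real \<Rightarrow> real" and \<sigma> T H K e :: real
  assumes T: "0 \<le> T" and \<sigma>: "\<bar>\<sigma>\<bar> = 1" and K: "0 \<le> K"
  and d\<theta>: "\<And>s. s\<in>{0..T} \<Longrightarrow> (\<theta> has_real_derivative (2 * Q s + \<sigma> * g s * sin (\<theta> s))) (at s within {0..T})"
  and dh: "\<And>s. s\<in>{0..T} \<Longrightarrow> (h has_real_derivative h' s) (at s within {0..T})"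
  and hdef: "\<And>s. s\<in>{0..T} \<Longrightarrow> h s = g s / (2 * Q s)"
  and Qpos: "\<And>s. s\<in>{0..T} \<Longrightarrow> Q s > 0"
  and cg: "continuous_on {0..T} g" and cQ: "continuous_on {0..T} Q"
  and ch': "continuous_on {0..T} h'" and c\<theta>: "continuous_on {0..T} \<theta>"
  and c\<rho>: "continuous_on {0..T} \<rho>"
  and hb: "\<And>s. s\<in>{0..T} \<Longrightarrow> \<bar>h s\<bar> \<le> H"
  and h'b: "\<And>s. s\<in>{0..T} \<Longrightarrow> \<bar>h' s\<bar> \<le> K * \<rho> s"
  and gb: "\<And>s. s\<in>{0..T} \<Longrightarrow> (g s)\<^sup>2 / (2 * Q s) \<le> K * \<rho> s"
  and \<rho>int: "integral {0..T} \<rho> \<le> e"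
  shows "\<bar>integral {0..T} (\<lambda>s. g s * cos (\<theta> s))\<bar> \<le> 2 * H + 2 * K * e"
proof -
  define F1 where "F1 = (\<lambda>s. h' s * sin (\<theta> s))"
  define F2 where "F2 = (\<lambda>s. g s * cos (\<theta> s))"
  define F3 where "F3 = (\<lambda>s. (g s)\<^sup>2 * sin (\<theta> s) * cos (\<theta> s) / (2 * Q s))"
  have der: "((\<lambda>s. h s * sin (\<theta> s)) has_vector_derivative (F1 s + F2 s + \<sigma> * F3 s)) (at s within {0..T})"
    if s: "s \<in> {0..T}" for s
  proof -
    have "((\<lambda>s. h s * sin (\<theta> s)) has_real_derivative
        h' s * sin (\<theta> s) + h s * (cos (\<theta> s) * (2 * Q s + \<sigma> * g s * sin (\<theta> s)))) (at s within {0..T})"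
      by (auto intro!: derivative_eq_intros dh[OF s] d\<theta>[OF s])
    moreover have "h' s * sin (\<theta> s) + h s * (cos (\<theta> s) * (2 * Q s + \<sigma> * g s * sin (\<theta> s)))
        = F1 s + F2 s + \<sigma> * F3 s"
    proof -
      have gs: "g s = 2 * Q s * h s" using hdef[OF s] Qpos[OF s] by simp
      show ?thesis using Qpos[OF s] unfolding F1_def F2_def F3_def gs
        by (simp add: field_simps power2_eq_square)
    qed
    ultimately show ?thesis by (simp add: has_real_derivative_iff_has_vector_derivative)
  qed
  have ftc: "((\<lambda>s. F1 s + F2 s + \<sigma> * F3 s) has_integral (h T * sin (\<theta> T) - h 0 * sin (\<theta> 0))) {0..T}"
    by (rule fundamental_theorem_of_calculus[OF T der]) auto
  have Qnz: "\<forall>s\<in>{0..T}. 2 * Q s \<noteq> 0" using Qpos by fastforce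
  have c1: "continuous_on {0..T} F1" unfolding F1_def by (intro continuous_intros ch' c\<theta>)
  have c2: "continuous_on {0..T} F2" unfolding F2_def by (intro continuous_intros cg c\<theta>)
  have c3: "continuous_on {0..T} F3" unfolding F3_def by (intro continuous_intros cg c\<theta> cQ Qnz)
  have i1: "F1 integrable_on {0..T}" by (rule integrable_continuous_real[OF c1])
  have i2: "F2 integrable_on {0..T}" by (rule integrable_continuous_real[OF c2])
  have i3: "F3 integrable_on {0..T}" by (rule integrable_continuous_real[OF c3])
  have i\<rho>: "\<rho> integrable_on {0..T}" by (rule integrable_continuous_real[OF c\<rho>])
  have "integral {0..T} (\<lambda>s. F1 s + F2 s + \<sigma> * F3 s) = integral {0..T} F1 + integral {0..T} F2 + \<sigma> * integral {0..T} F3"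
  proof -
    have a: "(\<lambda>s. F1 s + F2 s) integrable_on {0..T}" using i1 i2 by (rule integrable_add)
    have b: "(\<lambda>s. \<sigma> * F3 s) integrable_on {0..T}" using integrable_cmul[OF i3, of \<sigma>] by simp
    have "integral {0..T} (\<lambda>s. F1 s + F2 s + \<sigma> * F3 s) = integral {0..T} (\<lambda>s. F1 s + F2 s) + integral {0..T} (\<lambda>s. \<sigma> * F3 s)"
      by (rule integral_add[OF a b])
    also have "\<dots> = integral {0..T} F1 + integral {0..T} F2 + \<sigma> * integral {0..T} F3"
      using integral_add[OF i1 i2] by simp
    finally show ?thesis .
  qed
  with ftc have eq: "integral {0..T} F2 = h T * sin (\<theta> T) - h 0 * sin (\<theta> 0) - integral {0..T} F1 - \<sigma> * integral {0..T} F3"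
    by (simp add: integral_unique)
  have iK: "(\<lambda>s. K * \<rho> s) integrable_on {0..T}" using integrable_cmul[OF i\<rho>, of K] by simp
  have Ke: "integral {0..T} (\<lambda>s. K * \<rho> s) \<le> K * e"
    using \<rho>int K by (simp add: mult_left_mono)
  have b1: "\<bar>integral {0..T} F1\<bar> \<le> integral {0..T} (\<lambda>s. K * \<rho> s)"
  proof -
    have "norm (integral {0..T} F1) \<le> integral {0..T} (\<lambda>s. K * \<rho> s)"
    proof (rule integral_norm_bound_integral[OF i1 iK])
      fix s assume s: "s \<in> {0..T}"
      have "\<bar>h' s * sin (\<theta> s)\<bar> \<le> \<bar>h' s\<bar> * 1"
        unfolding abs_mult by (rule mult_left_mono) auto
      then show "norm (F1 s) \<le> K * \<rho> s" using h'b[OF s] by (simp add: F1_def)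
    qed
    then show ?thesis by simp
  qed
  have b3: "\<bar>integral {0..T} F3\<bar> \<le> integral {0..T} (\<lambda>s. K * \<rho> s)"
  proof -
    have "norm (integral {0..T} F3) \<le> integral {0..T} (\<lambda>s. K * \<rho> s)"
    proof (rule integral_norm_bound_integral[OF i3 iK])
      fix s assume s: "s \<in> {0..T}"
      have sc: "\<bar>sin (\<theta> s) * cos (\<theta> s)\<bar> \<le> 1"
        unfolding abs_mult by (rule mult_le_one) auto
      have "\<bar>F3 s\<bar> = (g s)\<^sup>2 / (2 * Q s) * \<bar>sin (\<theta> s) * cos (\<theta> s)\<bar>"
        using Qpos[OF s] by (simp add: F3_def abs_mult abs_divide)
      also have "\<dots> \<le> (g s)\<^sup>2 / (2 * Q s) * 1"
        using Qpos[OF s] sc by (intro mult_left_mono) auto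
      finally show "norm (F3 s) \<le> K * \<rho> s" using gb[OF s] by simp
    qed
    then show ?thesis by simp
  qed
  have "\<bar>h T * sin (\<theta> T)\<bar> \<le> H"
  proof -
    have "\<bar>h T * sin (\<theta> T)\<bar> \<le> \<bar>h T\<bar> * 1" unfolding abs_mult by (rule mult_left_mono) auto
    then show ?thesis using hb[of T] T by simp
  qed
  moreover have "\<bar>h 0 * sin (\<theta> 0)\<bar> \<le> H"
  proof -
    have "\<bar>h 0 * sin (\<theta> 0)\<bar> \<le> \<bar>h 0\<bar> * 1" unfolding abs_mult by (rule mult_left_mono) auto
    then show ?thesis using hb[of 0] T by simp
  qed
  moreover have "\<bar>\<sigma> * integral {0..T} F3\<bar> \<le> K * e"
    using b3 Ke \<sigma> by (simp add: abs_mult)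
  ultimately show ?thesis
    using eq b1 Ke unfolding F2_def[symmetric] by linarith
qed

lemma drift_deriv:
  fixes E :: "real \<Rightarrow> real ^ 'n"
  assumes cE: "continuous_on UNIV E"
  shows "(drift q E has_vector_derivative q *\<^sub>R E t) (at t)"
proof -
  define f where "f = (\<lambda>s. q *\<^sub>R E s)"
  have cf: "continuous_on UNIV f" unfolding f_def by (intro continuous_intros cE)
  define a where "a = min t 0 - 1"
  define b where "b = max t 0 + 1"
  have eq: "drift q E x = integral {a..x} f - integral {a..0} f" if x: "x \<in> {a<..<b}" for x
  proof (cases "0 \<le> x")
    case True
    have "f integrable_on {a..x}" by (rule integrable_continuous_real[OF continuous_on_subset[OF cf]]) auto
    then have "integral {a..0} f + integral {0..x} f = integral {a..x} f"
      using Henstock_Kurzweil_Integration.integral_combine[where a=a and c=0 and b=x and f=f] True a_def by auto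
    then show ?thesis using True by (simp add: drift_def f_def algebra_simps)
  next
    case False
    have "f integrable_on {a..0}" by (rule integrable_continuous_real[OF continuous_on_subset[OF cf]]) auto
    then have "integral {a..x} f + integral {x..0} f = integral {a..0} f"
      using Henstock_Kurzweil_Integration.integral_combine[where a=a and c=x and b=0 and f=f] False x by auto
    then show ?thesis using False by (simp add: drift_def f_def algebra_simps)
  qed
  have t: "t \<in> {a<..<b}" by (auto simp: a_def b_def)
  have "((\<lambda>x. integral {a..x} f) has_vector_derivative f t) (at t within {a..b})"
    by (rule integral_has_vector_derivative[OF continuous_on_subset[OF cf]]) (use t in auto)
  moreover have "at t within {a..b} = at t"
    by (rule at_within_interior) (use t in auto)
  ultimately have "((\<lambda>x. integral {a..x} f - integral {a..0} f) has_vector_derivative f t) (at t)"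
    by (auto intro!: derivative_eq_intros)
  then have "(drift q E has_vector_derivative f t) (at t)"
    by (rule has_vector_derivative_transform_within_open[OF _ _ t]) (auto simp: eq)
  then show ?thesis by (simp add: f_def)
qed



lemma h_bounds:
  fixes c m N Q U V W p p' :: real
  assumes c: "c > 0" and m: "m > 0" and N: "N > 0" and QN: "Q * Q = N" and Qm: "m * c\<^sup>2 \<le> Q"
    and UN: "(c * U)\<^sup>2 \<le> N" and U: "U \<ge> 0" and V: "V \<ge> 0" and W: "W \<ge> 0"
    and p: "\<bar>p\<bar> \<le> U * V" and p': "\<bar>p'\<bar> \<le> V\<^sup>2 + U * W"
  shows "\<bar>c\<^sup>2 / 2 * (p' / (N * Q) - 3 * c\<^sup>2 * p\<^sup>2 / (N\<^sup>2 * Q))\<bar> \<le> (2 / m + c / 2) * ((V\<^sup>2 + W) / N)"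
    and "(c\<^sup>2 * p / N)\<^sup>2 / (2 * Q) \<le> (2 / m + c / 2) * ((V\<^sup>2 + W) / N)"
    and "\<bar>c\<^sup>2 * p / (2 * N * Q)\<bar> \<le> c * V / (2 * (m * c\<^sup>2)\<^sup>2)"
proof -
  have Qp: "Q > 0" using Qm c m by (smt (verit) mult_pos_pos zero_less_power)
  have cUQ: "c * U \<le> Q"
    using UN QN Qp by (metis less_le power2_eq_square power2_le_imp_le)
  have cQ: "c\<^sup>2 / Q \<le> 1 / m"
    using Qm m c Qp by (simp add: field_simps)
  have p2: "p\<^sup>2 \<le> U\<^sup>2 * V\<^sup>2"
    using p by (metis abs_ge_zero abs_le_square_iff power_mult_distrib power2_abs abs_of_nonneg U V mult_nonneg_nonneg)
  have NQ: "N * Q > 0" using N Qp by simp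
  have t1: "c\<^sup>2 * \<bar>p'\<bar> / (N * Q) \<le> V\<^sup>2 / (m * N) + c * W / N"
  proof -
    have "c\<^sup>2 * \<bar>p'\<bar> / (N * Q) \<le> c\<^sup>2 * (V\<^sup>2 + U * W) / (N * Q)"
      using p' NQ c by (intro divide_right_mono mult_left_mono) auto
    also have "\<dots> = (c\<^sup>2 / Q) * V\<^sup>2 / N + ((c * U) / Q) * (c * W / N)"
      using N Qp by (simp add: field_simps power2_eq_square)
    also have "\<dots> \<le> (1 / m) * V\<^sup>2 / N + 1 * (c * W / N)"
    proof (intro add_mono mult_mono divide_right_mono)
      show "c * U / Q \<le> 1" using cUQ Qp by simp
    qed (use cQ N c W V Qp U m in auto)
    finally show ?thesis by simp
  qed
  have t2: "3 * c\<^sup>2 * (c\<^sup>2 * p\<^sup>2) / (N\<^sup>2 * Q) \<le> 3 * V\<^sup>2 / (m * N)"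
  proof -
    have "3 * c\<^sup>2 * (c\<^sup>2 * p\<^sup>2) / (N\<^sup>2 * Q) \<le> 3 * c\<^sup>2 * ((c * U)\<^sup>2 * V\<^sup>2) / (N\<^sup>2 * Q)"
      using p2 N Qp by (intro divide_right_mono mult_left_mono) (auto simp: power_mult_distrib mult.assoc intro!: mult_left_mono)
    also have "\<dots> \<le> 3 * c\<^sup>2 * (N * V\<^sup>2) / (N\<^sup>2 * Q)"
      using UN N Qp by (intro divide_right_mono mult_left_mono mult_right_mono) auto
    also have "\<dots> = 3 * (c\<^sup>2 / Q) * V\<^sup>2 / N"
      using N Qp by (simp add: field_simps power2_eq_square)
    also have "\<dots> \<le> 3 * (1 / m) * V\<^sup>2 / N"
      using cQ N by (intro divide_right_mono mult_right_mono mult_left_mono) auto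
    finally show ?thesis by simp
  qed
  have "\<bar>c\<^sup>2 / 2 * (p' / (N * Q) - 3 * c\<^sup>2 * p\<^sup>2 / (N\<^sup>2 * Q))\<bar>
      \<le> (c\<^sup>2 * \<bar>p'\<bar> / (N * Q) + 3 * c\<^sup>2 * (c\<^sup>2 * p\<^sup>2) / (N\<^sup>2 * Q)) / 2"
  proof -
    have Y: "0 \<le> 3 * c\<^sup>2 * p\<^sup>2 / (N\<^sup>2 * Q)" using NQ N Qp by simp
    have X: "\<bar>p' / (N * Q)\<bar> = \<bar>p'\<bar> / (N * Q)" using NQ by (simp add: abs_divide)
    have "\<bar>c\<^sup>2 / 2 * (p' / (N * Q) - 3 * c\<^sup>2 * p\<^sup>2 / (N\<^sup>2 * Q))\<bar>
        = c\<^sup>2 / 2 * \<bar>p' / (N * Q) - 3 * c\<^sup>2 * p\<^sup>2 / (N\<^sup>2 * Q)\<bar>" by (simp add: abs_mult)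
    also have "\<dots> \<le> c\<^sup>2 / 2 * (\<bar>p'\<bar> / (N * Q) + 3 * c\<^sup>2 * p\<^sup>2 / (N\<^sup>2 * Q))"
    proof (intro mult_left_mono)
      have "\<bar>3 * c\<^sup>2 * p\<^sup>2 / (N\<^sup>2 * Q)\<bar> = 3 * c\<^sup>2 * p\<^sup>2 / (N\<^sup>2 * Q)" using Y by (rule abs_of_nonneg)
      show "\<bar>p' / (N * Q) - 3 * c\<^sup>2 * p\<^sup>2 / (N\<^sup>2 * Q)\<bar> \<le> \<bar>p'\<bar> / (N * Q) + 3 * c\<^sup>2 * p\<^sup>2 / (N\<^sup>2 * Q)"
        using abs_triangle_ineq4[of "p' / (N * Q)" "3 * c\<^sup>2 * p\<^sup>2 / (N\<^sup>2 * Q)"] unfolding X \<open>\<bar>3 * c\<^sup>2 * p\<^sup>2 / (N\<^sup>2 * Q)\<bar> = 3 * c\<^sup>2 * p\<^sup>2 / (N\<^sup>2 * Q)\<close> .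
    qed simp
    also have "\<dots> = (c\<^sup>2 * \<bar>p'\<bar> / (N * Q) + 3 * c\<^sup>2 * (c\<^sup>2 * p\<^sup>2) / (N\<^sup>2 * Q)) / 2"
      by (simp add: field_simps)
    finally show ?thesis .
  qed
  also have "\<dots> \<le> (V\<^sup>2 / (m * N) + c * W / N + 3 * V\<^sup>2 / (m * N)) / 2"
    by (intro divide_right_mono add_mono t1 t2) simp
  also have "\<dots> = (2 / m) * (V\<^sup>2 / N) + (c / 2) * (W / N)"
    using m N by (simp add: field_simps)
  also have "\<dots> \<le> (2 / m + c / 2) * ((V\<^sup>2 + W) / N)"
  proof -
    have e: "(2/m + c/2)*((V\<^sup>2+W)/N) = (2/m)*(V\<^sup>2/N) + (2/m)*(W/N) + ((c/2)*(V\<^sup>2/N) + (c/2)*(W/N))"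
      by (simp add: algebra_simps add_divide_distrib)
    have "0 \<le> (2/m)*(W/N)" using m N W by simp
    moreover have "0 \<le> (c/2)*(V\<^sup>2/N)" using c N by simp
    ultimately show ?thesis unfolding e by linarith
  qed
  finally show "\<bar>c\<^sup>2 / 2 * (p' / (N * Q) - 3 * c\<^sup>2 * p\<^sup>2 / (N\<^sup>2 * Q))\<bar> \<le> (2 / m + c / 2) * ((V\<^sup>2 + W) / N)" .
  have "(c\<^sup>2 * p / N)\<^sup>2 / (2 * Q) = (3 * c\<^sup>2 * (c\<^sup>2 * p\<^sup>2) / (N\<^sup>2 * Q)) / 6"
    using N Qp by (simp add: power2_eq_square field_simps)
  also have "\<dots> \<le> (3 * V\<^sup>2 / (m * N)) / 6" using t2 by (rule divide_right_mono) simp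
  also have "\<dots> \<le> (2 / m + c / 2) * ((V\<^sup>2 + W) / N)"
  proof -
    have e: "(2/m + c/2)*((V\<^sup>2+W)/N) = (2/m)*(V\<^sup>2/N) + (2/m)*(W/N) + ((c/2)*(V\<^sup>2/N) + (c/2)*(W/N))"
      by (simp add: algebra_simps add_divide_distrib)
    have "0 \<le> (2/m)*(W/N)" using m N W by simp
    moreover have "0 \<le> (c/2)*(V\<^sup>2/N)" using c N by simp
    moreover have "0 \<le> (c/2)*(W/N)" using c N W by simp
    moreover have "(3 * V\<^sup>2 / (m * N)) / 6 \<le> (2/m)*(V\<^sup>2/N)"
      using m N by (simp add: field_simps)
    ultimately show ?thesis unfolding e by linarith
  qed
  finally show "(c\<^sup>2 * p / N)\<^sup>2 / (2 * Q) \<le> (2 / m + c / 2) * ((V\<^sup>2 + W) / N)" .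
  have "\<bar>c\<^sup>2 * p / (2 * N * Q)\<bar> \<le> c\<^sup>2 * (U * V) / (2 * N * Q)"
  proof -
    have "\<bar>c\<^sup>2 * p / (2 * N * Q)\<bar> = c\<^sup>2 * \<bar>p\<bar> / (2 * N * Q)"
      using N Qp by (simp add: abs_mult abs_divide)
    also have "\<dots> \<le> c\<^sup>2 * (U * V) / (2 * N * Q)"
      using p N Qp by (intro divide_right_mono mult_left_mono) auto
    finally show ?thesis .
  qed
  also have "\<dots> = c * ((c * U) / Q) * V / (2 * N)"
    using N Qp by (simp add: field_simps power2_eq_square)
  also have "\<dots> \<le> c * 1 * V / (2 * N)"
    using cUQ Qp c V N by (intro divide_right_mono mult_right_mono mult_left_mono) auto
  also have "\<dots> \<le> c * V / (2 * (m * c\<^sup>2)\<^sup>2)"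
  proof -
    have "(m * c\<^sup>2)\<^sup>2 \<le> N" using Qm QN m c by (metis power2_eq_square power_mono zero_le_mult_iff zero_le_power2 less_le)
    then have "c * V / (2 * N) \<le> c * V / (2 * (m * c\<^sup>2)\<^sup>2)"
      using c V m N by (intro divide_left_mono) auto
    then show ?thesis by simp
  qed
  finally show "\<bar>c\<^sup>2 * p / (2 * N * Q)\<bar> \<le> c * V / (2 * (m * c\<^sup>2)\<^sup>2)" .
qed


lemma sqrt_exp_ln: "0 < x \<Longrightarrow> sqrt x = exp (ln x / 2)"
  using powr_half_sqrt[of x] by (simp add: powr_def)

lemma amp_A:
  fixes Q0 Qt I Wb X :: real
  assumes "Q0 > 0" "Qt > 0" "X = (ln Qt - ln Q0) / 2 - I / 2" "\<bar>I\<bar> \<le> Wb"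
  shows "sqrt Q0 / sqrt Qt * exp (- (Wb / 2 + 1)) \<le> \<bar>exp (- X)\<bar>
     \<and> \<bar>exp (- X)\<bar> \<le> sqrt Q0 / sqrt Qt * exp (Wb / 2 + 1)"
proof -
  have "- X = ln Q0 / 2 - ln Qt / 2 + I / 2" using assms(3) by (simp add: field_simps)
  then have "exp (- X) = exp (ln Q0 / 2) / exp (ln Qt / 2) * exp (I / 2)"
    by (simp add: exp_add exp_diff)
  then have e: "\<bar>exp (- X)\<bar> = sqrt Q0 / sqrt Qt * exp (I / 2)"
    using assms by (simp add: sqrt_exp_ln)
  have p: "0 < sqrt Q0 / sqrt Qt" using assms by simp
  have "exp (- (Wb / 2 + 1)) \<le> exp (I / 2)" "exp (I / 2) \<le> exp (Wb / 2 + 1)"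
    using assms(4) by auto
  then show ?thesis unfolding e using p
    by (meson less_imp_le mult_left_mono)
qed

lemma amp_C:
  fixes Q0 Qt I Wb X :: real
  assumes "Q0 > 0" "Qt > 0" "X = (ln Qt - ln Q0) / 2 + I / 2" "\<bar>I\<bar> \<le> Wb"
  shows "exp (- (Wb / 2 + 1)) / (sqrt Qt * sqrt Q0) \<le> \<bar>exp (- X) / Q0\<bar>
     \<and> \<bar>exp (- X) / Q0\<bar> \<le> exp (Wb / 2 + 1) / (sqrt Qt * sqrt Q0)"
proof -
  have s: "sqrt Q0 * sqrt Q0 = Q0" using assms by simp
  have "- X = ln Q0 / 2 - ln Qt / 2 + (- I / 2)" using assms(3) by (simp add: field_simps)
  then have "exp (- X) = exp (ln Q0 / 2 - ln Qt / 2 + (- I / 2))" by (rule arg_cong)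
  then have "exp (- X) = exp (ln Q0 / 2) / exp (ln Qt / 2) * exp (- I / 2)"
    by (simp only: exp_add exp_diff)
  then have "exp (- X) = sqrt Q0 / sqrt Qt * exp (- I / 2)"
    using assms by (simp add: sqrt_exp_ln)
  then have e: "\<bar>exp (- X) / Q0\<bar> = exp (- I / 2) / (sqrt Qt * sqrt Q0)"
  proof -
    have "sqrt Q0 / sqrt Qt * exp (- I / 2) / Q0 = exp (- I / 2) / (sqrt Qt * sqrt Q0)"
      using assms(1,2) s by (simp add: field_simps)
    then show ?thesis using \<open>exp (- X) = sqrt Q0 / sqrt Qt * exp (- I / 2)\<close> assms(1,2) by simp
  qed
  have p: "0 < sqrt Qt * sqrt Q0" using assms by simp
  have "exp (- (Wb / 2 + 1)) \<le> exp (- I / 2)" "exp (- I / 2) \<le> exp (Wb / 2 + 1)"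
    using assms(4) by auto
  then show ?thesis unfolding e using p
    by (meson less_imp_le divide_right_mono)
qed


lemma inner_deriv:
  fixes u v :: "real \<Rightarrow> real ^ 'n"
  assumes "(u has_vector_derivative u') (at s)" "(v has_vector_derivative v') (at s)"
  shows "((\<lambda>\<tau>. u \<tau> \<bullet> v \<tau>) has_real_derivative (u' \<bullet> v s + u s \<bullet> v')) (at s)"
proof -
  have "((\<lambda>\<tau>. u \<tau> \<bullet> v \<tau>) has_derivative (\<lambda>h. u s \<bullet> (h *\<^sub>R v') + (h *\<^sub>R u') \<bullet> v s)) (at s)"
    using has_derivative_inner[OF assms(1)[unfolded has_vector_derivative_def] assms(2)[unfolded has_vector_derivative_def]] .
  moreover have "(\<lambda>h. u s \<bullet> (h *\<^sub>R v') + (h *\<^sub>R u') \<bullet> v s) = (*) (u' \<bullet> v s + u s \<bullet> v')"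
    by (rule ext) (simp add: algebra_simps)
  ultimately show ?thesis by (simp add: has_field_derivative_def)
qed

lemma phase:
  fixes Q G B :: "real \<Rightarrow> real" and \<kappa> T :: real
  assumes T: "0 \<le> T" and cQ: "continuous_on UNIV Q" and cG: "continuous_on UNIV G"
    and sol: "\<And>t. t \<ge> 0 \<Longrightarrow> ((\<lambda>s. Q s + \<kappa> * (G s * sin (B s) * cos (B s))) has_integral B t) {0..t}"
  shows "continuous_on {0..T} (\<lambda>s. 2 * B s)"
    and "\<And>s. s \<in> {0..T} \<Longrightarrow> ((\<lambda>s. 2 * B s) has_real_derivative (2 * Q s + \<kappa> * G s * sin (2 * B s))) (at s within {0..T})"
proof -
  define F where "F = (\<lambda>s. Q s + \<kappa> * (G s * sin (B s) * cos (B s)))"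
  have int: "F integrable_on {0..T}" using sol[OF T] unfolding F_def by blast
  have eqB: "B x = integral {0..x} F" if "x \<in> {0..T}" for x
    using sol[of x] that unfolding F_def by (simp add: integral_unique)
  have "continuous_on {0..T} (\<lambda>x. integral {0..x} F)" by (rule indefinite_integral_continuous_1[OF int])
  then have cB: "continuous_on {0..T} B" by (rule continuous_on_eq) (simp add: eqB)
  then show "continuous_on {0..T} (\<lambda>s. 2 * B s)" by (intro continuous_intros)
  have cF: "continuous_on {0..T} F" unfolding F_def
    by (intro continuous_intros cB continuous_on_subset[OF cQ] continuous_on_subset[OF cG]) auto
  fix s assume s: "s \<in> {0..T}"
  have "((\<lambda>u. integral {0..u} F) has_vector_derivative F s) (at s within {0..T})"
    by (rule integral_has_vector_derivative[OF cF s])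
  then have "(B has_vector_derivative F s) (at s within {0..T})"
    by (rule has_vector_derivative_transform[OF s, rotated]) (simp add: eqB)
  then have "(B has_real_derivative F s) (at s within {0..T})"
    by (simp add: has_real_derivative_iff_has_vector_derivative)
  then have "((\<lambda>s. 2 * B s) has_real_derivative 2 * F s) (at s within {0..T})"
    by (rule DERIV_cmult)
  moreover have "2 * F s = 2 * Q s + \<kappa> * G s * sin (2 * B s)"
    unfolding F_def sin_double by (simp add: algebra_simps)
  ultimately show "((\<lambda>s. 2 * B s) has_real_derivative (2 * Q s + \<kappa> * G s * sin (2 * B s))) (at s within {0..T})"
    by simp
qed

lemma aux_sin: "(g::real) * (1/2) - g * (1 - 2 * x) * (1/2) = g * x"
  by (simp add: algebra_simps)

lemma aux_cos: "(g::real) * (1/2) + g * (2 * x - 1) * (1/2) = g * x"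
  by (simp add: algebra_simps)

theorem proposition3p3:
  fixes c m q E00 E01 :: real
    and E E' :: "real \<Rightarrow> real ^ 'n"
    and B D :: "real \<Rightarrow> real ^ 'n \<Rightarrow> real"
  assumes c_pos: "c > 0" and m_pos: "m > 0" and q_nz: "q \<noteq> 0"
    and E_deriv: "\<And>t. (E has_vector_derivative E' t) (at t)"
    and E'_cont: "continuous_on UNIV E'"
    and E_sup0: "\<exists>M < E00. \<forall>t. (\<Sum>j\<in>UNIV. \<bar>E t $ j\<bar>) \<le> M"
    and E_sup1: "\<exists>M < E01. \<forall>t. (\<Sum>j\<in>UNIV. \<bar>E' t $ j\<bar>) \<le> M"
    and E1_lim: "filterlim (\<lambda>t. norm (drift q E t)) at_top at_top"
    and E1_ints: "\<exists>e0 e1. \<forall>a :: real ^ 'n.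
        (\<integral>\<^sup>+ s\<in>{s. 0 \<le> s \<and> norm (a + drift q E s) \<le> 2 * E00 / (m * c\<^sup>2)}.
            ennreal (norm (vector_derivative (drift q E) (at s))) \<partial>lborel) \<le> ennreal e0
        \<and> (\<forall>t\<ge>0. integral {0..t} (\<lambda>s.
              ((norm (vector_derivative (drift q E) (at s)))\<^sup>2
               + norm (vector_derivative (\<lambda>r. vector_derivative (drift q E) (at r)) (at s)))
              / (c\<^sup>2 * (norm (a + drift q E s))\<^sup>2 + (m * c\<^sup>2)\<^sup>2)) \<le> e1)"
    and B_sol: "\<And>t \<xi>. t \<ge> 0 \<Longrightarrow> ((\<lambda>s. Qf c m (drift q E) s \<xi>
          - Qd c m (drift q E) s \<xi> / Qf c m (drift q E) s \<xi> * sin (B s \<xi>) * cos (B s \<xi>))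
          has_integral B t \<xi>) {0..t}"
    and D_sol: "\<And>t \<xi>. t \<ge> 0 \<Longrightarrow> ((\<lambda>s. Qf c m (drift q E) s \<xi>
          + Qd c m (drift q E) s \<xi> / Qf c m (drift q E) s \<xi> * sin (D s \<xi>) * cos (D s \<xi>))
          has_integral D t \<xi>) {0..t}"
  shows "\<exists>C0 C1 :: real. 0 < C0 \<and> 0 < C1 \<and>
    (\<forall>t \<ge> 0. \<forall>\<xi> :: real ^ 'n.
      (let Q = (\<lambda>s. Qf c m (drift q E) s \<xi>);
           Q' = (\<lambda>s. Qd c m (drift q E) s \<xi>);
           A = exp (- integral {0..t} (\<lambda>s. Q' s / Q s * (sin (B s \<xi>))\<^sup>2));
           C = exp (- integral {0..t} (\<lambda>s. Q' s / Q s * (cos (D s \<xi>))\<^sup>2)) / Q 0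
       in sqrt (Q 0) / sqrt (Q t) * exp (- C0) \<le> \<bar>A\<bar>
        \<and> \<bar>A\<bar> \<le> sqrt (Q 0) / sqrt (Q t) * exp C0
        \<and> exp (- C1) / (sqrt (Q t) * sqrt (Q 0)) \<le> \<bar>C\<bar>
        \<and> \<bar>C\<bar> \<le> exp C1 / (sqrt (Q t) * sqrt (Q 0))))"
  proof -
  obtain M0 where M0: "\<forall>t. (\<Sum>j\<in>UNIV. \<bar>E t $ j\<bar>) \<le> M0" using E_sup0 by blast
  obtain e0 e1 where ee: "\<forall>a :: real ^ 'n.
        (\<integral>\<^sup>+ s\<in>{s. 0 \<le> s \<and> norm (a + drift q E s) \<le> 2 * E00 / (m * c\<^sup>2)}.
            ennreal (norm (vector_derivative (drift q E) (at s))) \<partial>lborel) \<le> ennreal e0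
        \<and> (\<forall>t\<ge>0. integral {0..t} (\<lambda>s.
              ((norm (vector_derivative (drift q E) (at s)))\<^sup>2
               + norm (vector_derivative (\<lambda>r. vector_derivative (drift q E) (at r)) (at s)))
              / (c\<^sup>2 * (norm (a + drift q E s))\<^sup>2 + (m * c\<^sup>2)\<^sup>2)) \<le> e1)"
    using E1_ints by blast
  have cE: "continuous_on UNIV E"
    using E_deriv by (intro continuous_at_imp_continuous_on ballI has_vector_derivative_continuous) blast
  have db: "\<And>s. (drift q E has_vector_derivative q *\<^sub>R E s) (at s)" by (rule drift_deriv[OF cE])
  have vdb: "\<And>s. vector_derivative (drift q E) (at s) = q *\<^sub>R E s"
    using db by (rule vector_derivative_at)
  have dE2: "\<And>s. ((\<lambda>r. q *\<^sub>R E r) has_vector_derivative q *\<^sub>R E' s) (at s)"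
    using E_deriv by (auto intro!: derivative_eq_intros)
  have vdb2: "\<And>s. vector_derivative (\<lambda>r. vector_derivative (drift q E) (at r)) (at s) = q *\<^sub>R E' s"
    by (simp add: vdb vector_derivative_at[OF dE2])
  have Vb: "norm (q *\<^sub>R E s) \<le> \<bar>q\<bar> * M0" for s
  proof -
    have "norm (E s) \<le> M0" using norm_le_l1_cart[of "E s"] M0 by (meson order_trans)
    then show ?thesis by (simp add: mult_left_mono)
  qed
  define K where "K = 2 / m + c / 2"
  define H where "H = c * (\<bar>q\<bar> * M0) / (2 * (m * c\<^sup>2)\<^sup>2)"
  define Wb where "Wb = \<bar>2 * H + 2 * K * e1\<bar>"
  have K0: "0 \<le> K" using m_pos c_pos by (simp add: K_def)
  have cE': "continuous_on UNIV E'" by (rule E'_cont)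
  have main: "sqrt (Qf c m (drift q E) 0 \<xi>) / sqrt (Qf c m (drift q E) t \<xi>) * exp (- (Wb / 2 + 1))
        \<le> \<bar>exp (- integral {0..t} (\<lambda>s. Qd c m (drift q E) s \<xi> / Qf c m (drift q E) s \<xi> * (sin (B s \<xi>))\<^sup>2))\<bar>
      \<and> \<bar>exp (- integral {0..t} (\<lambda>s. Qd c m (drift q E) s \<xi> / Qf c m (drift q E) s \<xi> * (sin (B s \<xi>))\<^sup>2))\<bar>
        \<le> sqrt (Qf c m (drift q E) 0 \<xi>) / sqrt (Qf c m (drift q E) t \<xi>) * exp (Wb / 2 + 1)
      \<and> exp (- (Wb / 2 + 1)) / (sqrt (Qf c m (drift q E) t \<xi>) * sqrt (Qf c m (drift q E) 0 \<xi>))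
        \<le> \<bar>exp (- integral {0..t} (\<lambda>s. Qd c m (drift q E) s \<xi> / Qf c m (drift q E) s \<xi> * (cos (D s \<xi>))\<^sup>2)) / Qf c m (drift q E) 0 \<xi>\<bar>
      \<and> \<bar>exp (- integral {0..t} (\<lambda>s. Qd c m (drift q E) s \<xi> / Qf c m (drift q E) s \<xi> * (cos (D s \<xi>))\<^sup>2)) / Qf c m (drift q E) 0 \<xi>\<bar>
        \<le> exp (Wb / 2 + 1) / (sqrt (Qf c m (drift q E) t \<xi>) * sqrt (Qf c m (drift q E) 0 \<xi>))"
    if t: "0 \<le> t" for t :: real and \<xi> :: "real ^ 'n"
  proof -
    define Qs where "Qs = (\<lambda>s. Qf c m (drift q E) s \<xi>)"
    define u where "u = (\<lambda>s. \<xi> + drift q E s)"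
    define N where "N = (\<lambda>s. c\<^sup>2 * (norm (u s))\<^sup>2 + (m * c\<^sup>2)\<^sup>2)"
    define p where "p = (\<lambda>s. u s \<bullet> (q *\<^sub>R E s))"
    define p' where "p' = (\<lambda>s. (norm (q *\<^sub>R E s))\<^sup>2 + u s \<bullet> (q *\<^sub>R E' s))"
    define G where "G = (\<lambda>s. Qd c m (drift q E) s \<xi> / Qs s)"
    define h where "h = (\<lambda>s. c\<^sup>2 * p s / (2 * N s * Qs s))"
    define h' where "h' = (\<lambda>s. c\<^sup>2 / 2 * (p' s / (N s * Qs s) - 3 * c\<^sup>2 * (p s)\<^sup>2 / ((N s)\<^sup>2 * Qs s)))"
    define \<rho> where "\<rho> = (\<lambda>s. ((norm (q *\<^sub>R E s))\<^sup>2 + norm (q *\<^sub>R E' s)) / N s)"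
    have QsN: "Qs s = sqrt (N s)" for s by (simp add: Qs_def Qf_def N_def u_def)
    have Npos: "N s > 0" for s using c_pos m_pos by (simp add: N_def add_nonneg_pos)
    have NQ: "Qs s * Qs s = N s" for s using QsN[of s] Npos[of s] by simp
    have Qpos: "Qs s > 0" for s using QsN[of s] Npos[of s] by simp
    have Qm: "m * c\<^sup>2 \<le> Qs s" for s
    proof -
      have "(m * c\<^sup>2)\<^sup>2 \<le> N s" by (simp add: N_def)
      then have "sqrt ((m * c\<^sup>2)\<^sup>2) \<le> sqrt (N s)" by (rule real_sqrt_le_mono)
      then show ?thesis using m_pos c_pos by (simp add: QsN)
    qed
    have dQ: "(Qs has_real_derivative c\<^sup>2 * p s / Qs s) (at s)" for s
      using Q_deriv[OF db[of s] c_pos m_pos, of \<xi>] by (simp add: Qs_def p_def u_def)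
    have Gs: "G s = c\<^sup>2 * p s / N s" for s
    proof -
      have "Qd c m (drift q E) s \<xi> = c\<^sup>2 * p s / Qs s"
        unfolding Qd_def using DERIV_imp_deriv[OF dQ[of s]] by (simp add: Qs_def)
      then show ?thesis using Qpos[of s] by (simp add: G_def NQ[of s, symmetric] field_simps power2_eq_square)
    qed
    have hG: "h s = G s / (2 * Qs s)" for s
      using Qpos[of s] by (simp add: h_def Gs NQ[of s, symmetric] field_simps)
    have du: "(u has_vector_derivative q *\<^sub>R E s) (at s)" for s
      unfolding u_def using db[of s] by (auto intro!: derivative_eq_intros)
    have dp: "(p has_real_derivative p' s) (at s)" for s
    proof -
      have "((\<lambda>\<tau>. u \<tau> \<bullet> q *\<^sub>R E \<tau>) has_real_derivative (q *\<^sub>R E s \<bullet> q *\<^sub>R E s + u s \<bullet> q *\<^sub>R E' s)) (at s)"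
        by (rule inner_deriv[OF du dE2])
      then show ?thesis unfolding p_def p'_def power2_norm_eq_inner .
    qed
    have dN: "(N has_real_derivative 2 * c\<^sup>2 * p s) (at s)" for s
    proof -
      have "((\<lambda>\<tau>. u \<tau> \<bullet> u \<tau>) has_real_derivative (q *\<^sub>R E s \<bullet> u s + u s \<bullet> q *\<^sub>R E s)) (at s)"
        by (rule inner_deriv[OF du du])
      then have "((\<lambda>\<tau>. c\<^sup>2 * (u \<tau> \<bullet> u \<tau>) + (m * c\<^sup>2)\<^sup>2) has_real_derivative c\<^sup>2 * (q *\<^sub>R E s \<bullet> u s + u s \<bullet> q *\<^sub>R E s)) (at s)"
        by (auto intro!: derivative_eq_intros)
      moreover have "(\<lambda>\<tau>. c\<^sup>2 * (u \<tau> \<bullet> u \<tau>) + (m * c\<^sup>2)\<^sup>2) = N"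
        by (rule ext) (simp add: N_def power2_norm_eq_inner)
      ultimately show ?thesis by (simp add: p_def inner_commute mult.commute mult.left_commute)
    qed
    have dh: "(h has_real_derivative h' s) (at s)" for s
    proof -
      have d1: "((\<lambda>s. c\<^sup>2 * p s) has_real_derivative c\<^sup>2 * p' s) (at s)"
        by (rule DERIV_cmult[OF dp])
      have d2: "((\<lambda>s. 2 * N s * Qs s) has_real_derivative
          2 * (2 * c\<^sup>2 * p s) * Qs s + 2 * N s * (c\<^sup>2 * p s / Qs s)) (at s)"
        by (auto intro!: derivative_eq_intros dN dQ)
      have nz: "2 * N s * Qs s \<noteq> 0" using Npos[of s] Qpos[of s] by simp
      have "(h has_real_derivative (c\<^sup>2 * p' s * (2 * N s * Qs s) - c\<^sup>2 * p s * (2 * (2 * c\<^sup>2 * p s) * Qs s + 2 * N s * (c\<^sup>2 * p s / Qs s)))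
          / ((2 * N s * Qs s) * (2 * N s * Qs s))) (at s)"
        unfolding h_def by (rule DERIV_divide[OF d1 d2 nz])
      moreover have "(c\<^sup>2 * p' s * (2 * N s * Qs s) - c\<^sup>2 * p s * (2 * (2 * c\<^sup>2 * p s) * Qs s + 2 * N s * (c\<^sup>2 * p s / Qs s)))
          / ((2 * N s * Qs s) * (2 * N s * Qs s)) = h' s"
      proof -
        have Ns: "N s = Qs s * Qs s" using NQ[of s] by simp
        show ?thesis unfolding h'_def Ns using Qpos[of s]
          by (simp add: field_simps power2_eq_square)
      qed
      ultimately show ?thesis by simp
    qed
    have cu: "continuous_on UNIV u" using du
      by (intro continuous_at_imp_continuous_on ballI has_vector_derivative_continuous) blast
    have cQ: "continuous_on UNIV Qs" using dQ
      by (intro continuous_at_imp_continuous_on ballI DERIV_isCont) blast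
    have cN: "continuous_on UNIV N" using dN
      by (intro continuous_at_imp_continuous_on ballI DERIV_isCont) blast
    have cp: "continuous_on UNIV p" using dp
      by (intro continuous_at_imp_continuous_on ballI DERIV_isCont) blast
    have cp': "continuous_on UNIV p'" unfolding p'_def
      by (intro continuous_intros cE cE' cu)
    have Nnz: "\<forall>s\<in>UNIV. N s \<noteq> 0" using Npos by (metis less_irrefl)
    have Geq: "G = (\<lambda>s. c\<^sup>2 * p s / N s)" by (rule ext) (simp add: Gs)
    have cG: "continuous_on UNIV G" unfolding Geq by (intro continuous_intros cp cN Nnz)
    have h'nz: "\<forall>s\<in>UNIV. N s * Qs s \<noteq> 0" "\<forall>s\<in>UNIV. (N s)\<^sup>2 * Qs s \<noteq> 0"
      using Npos Qpos by (metis mult_pos_pos less_irrefl zero_less_power)+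
    have ch': "continuous_on UNIV h'" unfolding h'_def
      by (intro continuous_intros cp cp' cN cQ h'nz)
    have c\<rho>: "continuous_on UNIV \<rho>" unfolding \<rho>_def
      by (intro continuous_intros cE cE' cN Nnz)
    have \<rho>int: "integral {0..t} \<rho> \<le> e1"
    proof -
      have "integral {0..t} (\<lambda>s.
              ((norm (vector_derivative (drift q E) (at s)))\<^sup>2
               + norm (vector_derivative (\<lambda>r. vector_derivative (drift q E) (at r)) (at s)))
              / (c\<^sup>2 * (norm (\<xi> + drift q E s))\<^sup>2 + (m * c\<^sup>2)\<^sup>2)) \<le> e1"
        using ee t by blast
      moreover have "(\<lambda>s. ((norm (vector_derivative (drift q E) (at s)))\<^sup>2
               + norm (vector_derivative (\<lambda>r. vector_derivative (drift q E) (at r)) (at s)))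
              / (c\<^sup>2 * (norm (\<xi> + drift q E s))\<^sup>2 + (m * c\<^sup>2)\<^sup>2)) = \<rho>"
        by (rule ext) (simp only: vdb vdb2 vector_derivative_at[OF dE2] \<rho>_def N_def u_def)
      ultimately show ?thesis by simp
    qed
    have bnds: "\<bar>h' s\<bar> \<le> K * \<rho> s \<and> (G s)\<^sup>2 / (2 * Qs s) \<le> K * \<rho> s \<and> \<bar>h s\<bar> \<le> H" for s
    proof -
      have UN: "(c * norm (u s))\<^sup>2 \<le> N s" by (simp add: N_def power_mult_distrib)
      have pb: "\<bar>p s\<bar> \<le> norm (u s) * norm (q *\<^sub>R E s)"
        unfolding p_def by (rule Cauchy_Schwarz_ineq2)
      have pb': "\<bar>p' s\<bar> \<le> (norm (q *\<^sub>R E s))\<^sup>2 + norm (u s) * norm (q *\<^sub>R E' s)"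
      proof -
        have "\<bar>u s \<bullet> q *\<^sub>R E' s\<bar> \<le> norm (u s) * norm (q *\<^sub>R E' s)" by (rule Cauchy_Schwarz_ineq2)
        then show ?thesis unfolding p'_def by (smt (verit) zero_le_power2)
      qed
      note hb = h_bounds[OF c_pos m_pos Npos NQ Qm UN norm_ge_zero norm_ge_zero norm_ge_zero pb pb']
      have "\<bar>h' s\<bar> \<le> K * \<rho> s" using hb(1) by (simp add: h'_def K_def \<rho>_def)
      moreover have "(G s)\<^sup>2 / (2 * Qs s) \<le> K * \<rho> s" using hb(2) by (simp add: Gs K_def \<rho>_def)
      moreover have "\<bar>h s\<bar> \<le> H"
      proof -
        have "c * norm (q *\<^sub>R E s) / (2 * (m * c\<^sup>2)\<^sup>2) \<le> c * (\<bar>q\<bar> * M0) / (2 * (m * c\<^sup>2)\<^sup>2)"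
          using Vb[of s] c_pos m_pos by (intro divide_right_mono mult_left_mono) auto
        then show ?thesis using hb(3) by (simp add: h_def H_def)
      qed
      ultimately show ?thesis by blast
    qed
    have T01: "\<And>s. s \<in> {0..t} \<Longrightarrow> (h has_real_derivative h' s) (at s within {0..t})"
      using dh by (blast intro: has_field_derivative_at_within)
    have solB: "((\<lambda>s. Qs s + (-1) * (G s * sin (B s \<xi>) * cos (B s \<xi>))) has_integral B t' \<xi>) {0..t'}"
      if "t' \<ge> 0" for t'
      using B_sol[OF that, of \<xi>] by (simp add: G_def Qs_def)
    note phB = phase[where B="\<lambda>s. B s \<xi>", OF t cQ cG solB]
    have IB: "\<bar>integral {0..t} (\<lambda>s. G s * cos (2 * B s \<xi>))\<bar> \<le> 2 * H + 2 * K * e1"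
      by (rule osc_bound[where \<sigma>="-1" and Q=Qs and h=h and h'=h' and \<rho>=\<rho>, OF t _ K0 phB(2) T01 hG Qpos
            continuous_on_subset[OF cG] continuous_on_subset[OF cQ] continuous_on_subset[OF ch'] phB(1)
            continuous_on_subset[OF c\<rho>]]) (use bnds \<rho>int in auto)
    have solD: "((\<lambda>s. Qs s + 1 * (G s * sin (D s \<xi>) * cos (D s \<xi>))) has_integral D t' \<xi>) {0..t'}"
      if "t' \<ge> 0" for t'
      using D_sol[OF that, of \<xi>] by (simp add: G_def Qs_def)
    note phD = phase[where B="\<lambda>s. D s \<xi>", OF t cQ cG solD]
    have ID: "\<bar>integral {0..t} (\<lambda>s. G s * cos (2 * D s \<xi>))\<bar> \<le> 2 * H + 2 * K * e1"
      by (rule osc_bound[where \<sigma>="1" and Q=Qs and h=h and h'=h' and \<rho>=\<rho>, OF t _ K0 _ T01 hG Qpos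
            continuous_on_subset[OF cG] continuous_on_subset[OF cQ] continuous_on_subset[OF ch'] phD(1)
            continuous_on_subset[OF c\<rho>]]) (use bnds \<rho>int phD(2) in auto)
    have iG: "(G has_integral (ln (Qs t) - ln (Qs 0))) {0..t}"
    proof -
      have "((\<lambda>s. ln (Qs s)) has_vector_derivative G s) (at s within {0..t})" for s
      proof -
        have "((\<lambda>s. ln (Qs s)) has_real_derivative (1 / Qs s) * (c\<^sup>2 * p s / Qs s)) (at s)"
          by (rule DERIV_chain2[where f=ln, OF DERIV_ln_divide[OF Qpos] dQ])
        moreover have "(1 / Qs s) * (c\<^sup>2 * p s / Qs s) = G s"
          using NQ[of s] by (simp add: Gs)
        ultimately show ?thesis
          by (simp add: has_real_derivative_iff_has_vector_derivative[symmetric] has_field_derivative_at_within)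
      qed
      then show ?thesis using fundamental_theorem_of_calculus[OF t] by blast
    qed
    have cGB: "continuous_on {0..t} (\<lambda>s. G s * cos (2 * B s \<xi>))"
      by (intro continuous_intros continuous_on_subset[OF cG] phB(1)) auto
    have cGD: "continuous_on {0..t} (\<lambda>s. G s * cos (2 * D s \<xi>))"
      by (intro continuous_intros continuous_on_subset[OF cG] phD(1)) auto
    define IBv where "IBv = integral {0..t} (\<lambda>s. G s * cos (2 * B s \<xi>))"
    define IDv where "IDv = integral {0..t} (\<lambda>s. G s * cos (2 * D s \<xi>))"
    have hB: "((\<lambda>s. G s * cos (2 * B s \<xi>)) has_integral IBv) {0..t}"
      unfolding IBv_def using integrable_continuous_real[OF cGB] by blast
    have hD: "((\<lambda>s. G s * cos (2 * D s \<xi>)) has_integral IDv) {0..t}"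
      unfolding IDv_def using integrable_continuous_real[OF cGD] by blast
    have XA: "integral {0..t} (\<lambda>s. Qd c m (drift q E) s \<xi> / Qf c m (drift q E) s \<xi> * (sin (B s \<xi>))\<^sup>2)
        = (ln (Qs t) - ln (Qs 0)) / 2 - IBv / 2"
    proof -
      have "((\<lambda>s. G s * (1/2) - G s * cos (2 * B s \<xi>) * (1/2)) has_integral
          ((ln (Qs t) - ln (Qs 0)) * (1/2) - IBv * (1/2))) {0..t}"
        by (intro has_integral_diff has_integral_mult_left iG hB)
      moreover have "(\<lambda>s. G s * (1/2) - G s * cos (2 * B s \<xi>) * (1/2))
          = (\<lambda>s. Qd c m (drift q E) s \<xi> / Qf c m (drift q E) s \<xi> * (sin (B s \<xi>))\<^sup>2)"
        by (rule ext) (simp only: cos_double_sin G_def Qs_def aux_sin)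
      ultimately show ?thesis by (simp add: integral_unique)
    qed
    have XD: "integral {0..t} (\<lambda>s. Qd c m (drift q E) s \<xi> / Qf c m (drift q E) s \<xi> * (cos (D s \<xi>))\<^sup>2)
        = (ln (Qs t) - ln (Qs 0)) / 2 + IDv / 2"
    proof -
      have "((\<lambda>s. G s * (1/2) + G s * cos (2 * D s \<xi>) * (1/2)) has_integral
          ((ln (Qs t) - ln (Qs 0)) * (1/2) + IDv * (1/2))) {0..t}"
        by (intro has_integral_add has_integral_mult_left iG hD)
      moreover have "(\<lambda>s. G s * (1/2) + G s * cos (2 * D s \<xi>) * (1/2))
          = (\<lambda>s. Qd c m (drift q E) s \<xi> / Qf c m (drift q E) s \<xi> * (cos (D s \<xi>))\<^sup>2)"
        by (rule ext) (simp only: cos_double_cos G_def Qs_def aux_cos)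
      ultimately show ?thesis by (simp add: integral_unique)
    qed
    have WB: "\<bar>IBv\<bar> \<le> Wb" "\<bar>IDv\<bar> \<le> Wb" using IB ID unfolding IBv_def IDv_def Wb_def by linarith+
    have A: "sqrt (Qs 0) / sqrt (Qs t) * exp (- (Wb / 2 + 1)) \<le> \<bar>exp (- ((ln (Qs t) - ln (Qs 0)) / 2 - IBv / 2))\<bar>
     \<and> \<bar>exp (- ((ln (Qs t) - ln (Qs 0)) / 2 - IBv / 2))\<bar> \<le> sqrt (Qs 0) / sqrt (Qs t) * exp (Wb / 2 + 1)"
      by (rule amp_A[OF Qpos Qpos refl WB(1)])
    have C: "exp (- (Wb / 2 + 1)) / (sqrt (Qs t) * sqrt (Qs 0)) \<le> \<bar>exp (- ((ln (Qs t) - ln (Qs 0)) / 2 + IDv / 2)) / Qs 0\<bar>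
     \<and> \<bar>exp (- ((ln (Qs t) - ln (Qs 0)) / 2 + IDv / 2)) / Qs 0\<bar> \<le> exp (Wb / 2 + 1) / (sqrt (Qs t) * sqrt (Qs 0))"
      by (rule amp_C[OF Qpos Qpos refl WB(2)])
    show ?thesis unfolding XA XD using A C by (simp add: Qs_def)
  qed
  have Wb0: "0 < Wb / 2 + 1" by (simp add: Wb_def add_nonneg_pos)
  show ?thesis
  proof (rule exI[of _ "Wb / 2 + 1"], rule exI[of _ "Wb / 2 + 1"], intro conjI allI impI Wb0)
    fix t :: real and \<xi> :: "real ^ 'n"
    assume "0 \<le> t"
    then show "let Q = (\<lambda>s. Qf c m (drift q E) s \<xi>);
           Q' = (\<lambda>s. Qd c m (drift q E) s \<xi>);
           A = exp (- integral {0..t} (\<lambda>s. Q' s / Q s * (sin (B s \<xi>))\<^sup>2));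
           C = exp (- integral {0..t} (\<lambda>s. Q' s / Q s * (cos (D s \<xi>))\<^sup>2)) / Q 0
       in sqrt (Q 0) / sqrt (Q t) * exp (- (Wb / 2 + 1)) \<le> \<bar>A\<bar>
        \<and> \<bar>A\<bar> \<le> sqrt (Q 0) / sqrt (Q t) * exp (Wb / 2 + 1)
        \<and> exp (- (Wb / 2 + 1)) / (sqrt (Q t) * sqrt (Q 0)) \<le> \<bar>C\<bar>
        \<and> \<bar>C\<bar> \<le> exp (Wb / 2 + 1) / (sqrt (Q t) * sqrt (Q 0))"
      unfolding Let_def by (rule main)
  qed
qed

end
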